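(* Let $X$ be as in the standing setting with skeleton $X_1,\dots,X_k$. Suppose $x,y\in X$ each lie in no $\operatorname{span}X_l$, and $x\in\operatorname{pos}\{x_i,x_j\}$, $y\in\operatorname{pos}\{y_{i'},y_{j'}\}$ with $x_i\in X_i$, $x_j\in X_j$, $y_{i'}\in X_{i'}$, $y_{j'}\in X_{j'}$, $i\ne j$, $i'\ne j'$. Then the index sets $\{i,j\}$ and $\{i',j'\}$ are either equal or disjoint.
   Context: Standing setting: $X\subset\mathbb R^n\setminus\{0\}$ is a finite set such that $0$ lies in the interior of $\operatorname{conv}X$, no element of $X$ is a positive multiple of another, and every $n+1$ points of $X$ are in good position. A finite set $A$ is in conical position if $0\notin\operatorname{conv}A$ and no point of $A$ lies in the positive hull (set of nonnegative linear combinations, denoted $\operatorname{pos}$) of the other points; it is in good position otherwise. A skeleton of $X$ is a collection of pairwise disjoint subsets $X_1,\dots,X_k\subseteq X$ such that each $X_i$ is the vertex set of a simplex whose relative interior contains $0$ and $\mathbb R^n=\operatorname{span}X_1\oplus\cdots\oplus\operatorname{span}X_k$. *)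

theory Defs
  imports "HOL-Analysis.Analysis"
begin

definition pos :: "'a::real_vector set \<Rightarrow> 'a set" where
  "pos A = {y. \<exists>c. (\<forall>a\<in>A. c a \<ge> 0) \<and> y = (\<Sum>a\<in>A. c a *\<^sub>R a)}"

definition conical_position :: "'a::real_vector set \<Rightarrow> bool" where
  "conical_position A \<longleftrightarrow> 0 \<notin> convex hull A \<and> (\<forall>a\<in>A. a \<notin> pos (A - {a}))"

definition good_position :: "'a::real_vector set \<Rightarrow> bool" where
  "good_position A \<longleftrightarrow> \<not> conical_position A"

definition standing_setting :: "'a::euclidean_space set \<Rightarrow> bool" where
  "standing_setting X \<longleftrightarrow>
     finite X \<and> 0 \<notin> X \<and> 0 \<in> interior (convex hull X) \<and>
     (\<forall>a\<in>X. \<forall>b\<in>X. a \<noteq> b \<longrightarrow> \<not> (\<exists>c>0. b = c *\<^sub>R a)) \<and>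
     (\<forall>A. A \<subseteq> X \<and> card A = DIM('a) + 1 \<longrightarrow> good_position A)"

definition direct_sum_UNIV :: "nat \<Rightarrow> (nat \<Rightarrow> 'a::real_vector set) \<Rightarrow> bool" where
  "direct_sum_UNIV k V \<longleftrightarrow>
     (\<forall>v. \<exists>u. (\<forall>l<k. u l \<in> V l) \<and> v = (\<Sum>l<k. u l)) \<and>
     (\<forall>u. (\<forall>l<k. u l \<in> V l) \<and> (\<Sum>l<k. u l) = 0 \<longrightarrow> (\<forall>l<k. u l = 0))"

definition skeleton :: "'a::euclidean_space set \<Rightarrow> nat \<Rightarrow> (nat \<Rightarrow> 'a set) \<Rightarrow> bool" where
  "skeleton X k Xs \<longleftrightarrow>
     (\<forall>l<k. Xs l \<subseteq> X) \<and>
     (\<forall>l<k. \<forall>m<k. l \<noteq> m \<longrightarrow> Xs l \<inter> Xs m = {}) \<and>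
     (\<forall>l<k. \<not> affine_dependent (Xs l) \<and> 0 \<in> rel_interior (convex hull (Xs l))) \<and>
     direct_sum_UNIV k (\<lambda>l. span (Xs l))"

end

theory Submission
  imports Defs
begin

lemma coord_unique:
  fixes B :: "'a::real_vector set"
  assumes "finite B" "independent B" "(\<Sum>b\<in>B. f b *\<^sub>R b) = (\<Sum>b\<in>B. g b *\<^sub>R b)" "b0 \<in> B"
  shows "f b0 = g b0"
proof (rule ccontr)
  assume ne: "f b0 \<noteq> g b0"
  have "(\<Sum>b\<in>B. (f b - g b) *\<^sub>R b) = 0"
    using assms(3) by (simp add: scaleR_diff_left sum_subtractf)
  then have "dependent B" using dependent_finite[OF assms(1)] ne assms(4)
    by (metis eq_iff_diff_eq_0)
  then show False using assms(2) by simp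
qed

lemma conical_contra:
  fixes X :: "'a::euclidean_space set"
  assumes st: "standing_setting X" and spanX: "span X = UNIV"
    and S: "S \<subseteq> X" "finite S" "independent S" and yX: "y \<in> X"
    and yrep: "y = (\<Sum>s\<in>S. \<beta> s *\<^sub>R s)"
    and pq: "p \<in> S" "q \<in> S" "p \<noteq> q" "\<beta> p > 0" "\<beta> q > 0" and r: "r \<in> S" "\<beta> r < 0"
  shows False
proof -
  have finX: "finite X" using st unfolding standing_setting_def by auto
  obtain B where B: "S \<subseteq> B" "B \<subseteq> X" "independent B" "X \<subseteq> span B"
    using maximal_independent_subset_extend[OF S(1) S(3)] by metis
  have finB: "finite B" using B(2) finX finite_subset by auto
  have spB: "span B = UNIV" using B(4) spanX by (metis span_eq_iff span_mono span_span top.extremum_uniqueI)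
  have cardB: "card B = DIM('a)"
    using dim_span_eq_card_independent[OF B(3)] spB by simp
  define \<beta>' where "\<beta>' b = (if b \<in> S then \<beta> b else 0)" for b
  have yB: "y = (\<Sum>b\<in>B. \<beta>' b *\<^sub>R b)"
    unfolding yrep \<beta>'_def
    by (rule sum.mono_neutral_cong_left[OF finB B(1)]) auto
  have \<beta>'p: "\<beta>' p > 0" "\<beta>' q > 0" "\<beta>' r < 0" using pq r by (auto simp: \<beta>'_def)
  have pB: "p \<in> B" "q \<in> B" "r \<in> B" using pq r B(1) by auto
  have yB': "y \<notin> B"
  proof
    assume "y \<in> B"
    have "(\<Sum>b\<in>B. \<beta>' b *\<^sub>R b) = (\<Sum>b\<in>B. (if b = y then 1 else 0) *\<^sub>R b)"
      using yB \<open>y \<in> B\<close> finB by (simp add: if_distrib[of "\<lambda>c. c *\<^sub>R _"] cong: if_cong)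
    from coord_unique[OF finB B(3) this pB(3)] \<beta>'p show False by (auto split: if_splits)
  qed
  define A where "A = insert y B"
  have finA: "finite A" using finB A_def by auto
  have "card A = DIM('a) + 1" using yB' finB cardB A_def by simp
  moreover have "A \<subseteq> X" using A_def B(2) yX by auto
  ultimately have gp: "good_position A" using st unfolding standing_setting_def by blast
  show False
  proof (cases "0 \<in> convex hull A")
    case True
    then obtain u where u: "\<forall>a\<in>A. 0 \<le> u a" "sum u A = 1" "(\<Sum>a\<in>A. u a *\<^sub>R a) = 0"
      using convex_hull_finite[OF finA] by auto
    have "(\<Sum>a\<in>A. u a *\<^sub>R a) = u y *\<^sub>R y + (\<Sum>b\<in>B. u b *\<^sub>R b)"
      using A_def finB yB' by simp
    also have "\<dots> = (\<Sum>b\<in>B. (u y * \<beta>' b + u b) *\<^sub>R b)"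
      unfolding yB by (simp add: scaleR_sum_right sum.distrib scaleR_add_left)
    finally have eq: "(\<Sum>b\<in>B. (u y * \<beta>' b + u b) *\<^sub>R b) = (\<Sum>b\<in>B. 0 *\<^sub>R b)" using u(3) by simp
    have c: "\<And>b. b \<in> B \<Longrightarrow> u y * \<beta>' b + u b = 0" using coord_unique[OF finB B(3) eq] by simp
    have uB: "\<And>b. b \<in> B \<Longrightarrow> u b \<ge> 0" "u y \<ge> 0" using u(1) A_def by auto
    have "u y * \<beta>' p \<ge> 0" using uB \<beta>'p by simp
    then have "u y * \<beta>' p = 0" using c[OF pB(1)] uB(1)[OF pB(1)] by linarith
    then have uy: "u y = 0" using \<beta>'p by simp
    then have "\<And>b. b \<in> B \<Longrightarrow> u b = 0" using c by simp
    then have "sum u A = 0" using uy A_def finB yB' by simp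
    then show False using u(2) by simp
  next
    case False
    then obtain a where a: "a \<in> A" "a \<in> pos (A - {a})"
      using gp unfolding good_position_def conical_position_def by blast
    then obtain c where c: "\<forall>z\<in>A - {a}. c z \<ge> 0" "a = (\<Sum>z\<in>A - {a}. c z *\<^sub>R z)"
      unfolding pos_def by auto
    show False
    proof (cases "a = y")
      case True
      then have "A - {a} = B" using A_def yB' by auto
      then have "(\<Sum>b\<in>B. \<beta>' b *\<^sub>R b) = (\<Sum>b\<in>B. c b *\<^sub>R b)" using c True yB by simp
      from coord_unique[OF finB B(3) this pB(3)] c \<open>A - {a} = B\<close> pB \<beta>'p show False by force
    next
      case False
      then have aB: "a \<in> B" using a A_def by auto
      have Aa: "A - {a} = insert y (B - {a})" using A_def False by auto
      have "a = c y *\<^sub>R y + (\<Sum>b\<in>B - {a}. c b *\<^sub>R b)"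
        using c(2) Aa finB yB' by simp
      also have "(\<Sum>b\<in>B - {a}. c b *\<^sub>R b) = (\<Sum>b\<in>B. (if b = a then 0 else c b) *\<^sub>R b)"
        using finB aB by (simp add: sum.remove[of B a] )
      finally have e1: "a = c y *\<^sub>R y + (\<Sum>b\<in>B. (if b = a then 0 else c b) *\<^sub>R b)" .
      have e2: "(\<Sum>b\<in>B. (if b = a then 1 else 0) *\<^sub>R b) = a"
        using finB aB by (simp add: if_distrib[of "\<lambda>t. t *\<^sub>R _"] cong: if_cong)
      have e3: "c y *\<^sub>R y = (\<Sum>b\<in>B. (c y * \<beta>' b) *\<^sub>R b)"
        by (subst yB) (simp add: scaleR_sum_right)
      have "(\<Sum>b\<in>B. (if b = a then 1 else 0) *\<^sub>R b) =
          (\<Sum>b\<in>B. (c y * \<beta>' b + (if b = a then 0 else c b)) *\<^sub>R b)"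
        unfolding e2 scaleR_add_left sum.distrib using e1 e3 by simp
      note cu = coord_unique[OF finB B(3) this]
      have cy: "c y \<ge> 0" using c(1) Aa by auto
      obtain e where e: "e \<in> B" "e \<noteq> a" "\<beta>' e > 0" using pB \<beta>'p pq(3) by metis
      have "0 = c y * \<beta>' e + c e" using cu[OF e(1)] e(2) by simp
      moreover have "c e \<ge> 0" using c(1) Aa e by auto
      moreover have "c y * \<beta>' e \<ge> 0" using cy e by simp
      ultimately have "c y * \<beta>' e = 0" by linarith
      then have "c y = 0" using e by simp
      then show False using cu[OF aB] by simp
    qed
  qed
qed

lemma ds3:
  fixes Xs :: "nat \<Rightarrow> 'a::euclidean_space set"
  assumes sk: "skeleton X k Xs" and idx: "i < k" "j < k" "m < k" "i \<noteq> j" "i \<noteq> m" "j \<noteq> m"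
    and v: "vi \<in> span (Xs i)" "vj \<in> span (Xs j)" "vm \<in> span (Xs m)" "vi + vj + vm = 0"
  shows "vi = 0 \<and> vj = 0 \<and> vm = 0"
proof -
  define U where "U l = (if l = i then vi else 0) + (if l = j then vj else 0) + (if l = m then vm else 0)" for l
  have "\<forall>l<k. U l \<in> span (Xs l)"
    using v idx by (auto simp: U_def span_zero)
  moreover have "(\<Sum>l<k. U l) = 0"
    unfolding U_def sum.distrib using idx v(4) by (simp add: sum.delta)
  ultimately have "\<forall>l<k. U l = 0"
    using sk unfolding skeleton_def direct_sum_UNIV_def by blast
  then show ?thesis using idx by (auto simp: U_def)
qed

lemma indep_remove:
  fixes T :: "'a::real_vector set"
  assumes fin: "finite T" and na: "\<not> affine_dependent T"
    and lam: "\<forall>t\<in>T. 0 < lm t" "sum lm T = 1" "(\<Sum>t\<in>T. lm t *\<^sub>R t) = 0" and wT: "w \<in> T"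
  shows "independent (T - {w})"
proof
  assume "dependent (T - {w})"
  then obtain \<mu> v where mu: "v \<in> T - {w}" "\<mu> v \<noteq> 0" "(\<Sum>t\<in>T - {w}. \<mu> t *\<^sub>R t) = 0"
    using dependent_finite[of "T - {w}"] fin by auto
  define s where "s = sum \<mu> (T - {w})"
  define \<nu> where "\<nu> t = (if t = w then 0 else \<mu> t) - s * lm t" for t
  have m1: "sum (\<lambda>t. if t = w then 0 else \<mu> t) T = s"
    unfolding s_def using fin wT by (auto simp: sum.remove[of T w] intro!: sum.cong)
  have m2: "(\<Sum>t\<in>T. (if t = w then 0 else \<mu> t) *\<^sub>R t) = 0"
    using fin wT mu(3) by (subst sum.remove[of T w]) (auto intro: trans[OF sum.cong[OF refl]])
  have "sum \<nu> T = 0" unfolding \<nu>_def sum_subtractf m1 using lam(2) by (simp add: sum_distrib_left[symmetric])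
  moreover have "(\<Sum>t\<in>T. \<nu> t *\<^sub>R t) = 0"
    unfolding \<nu>_def scaleR_diff_left sum_subtractf m2
    by (simp add: scaleR_scaleR[symmetric] scaleR_sum_right[symmetric] lam(3) del: scaleR_scaleR)
  ultimately have "\<forall>t\<in>T. \<nu> t = 0" using na affine_dependent_explicit_finite[OF fin] by blast
  then have "s * lm w = 0" using wT unfolding \<nu>_def by fastforce
  then have "s = 0" using lam(1) wT by auto
  then have "\<nu> v = \<mu> v" using mu(1) by (simp add: \<nu>_def)
  then show False using \<open>\<forall>t\<in>T. \<nu> t = 0\<close> mu by auto
qed

lemma indepS:
  fixes Xs :: "nat \<Rightarrow> 'a::euclidean_space set"
  assumes sk: "skeleton X k Xs" and idx: "i < k" "j < k" "m < k" "i \<noteq> j" "i \<noteq> m" "j \<noteq> m"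
    and R: "finite R" "R \<subseteq> Xs i" "u \<in> Xs i" "u \<notin> R" "independent (insert u R)"
    and w: "w \<in> Xs j" "w' \<in> Xs m" "w \<noteq> 0" "w' \<noteq> 0" "a \<noteq> 0" "x = a *\<^sub>R u + b *\<^sub>R w"
    and d: "x \<notin> R" "w \<notin> R" "w' \<notin> R" "x \<noteq> w" "x \<noteq> w'" "w \<noteq> w'"
  shows "independent (insert x (insert w (insert w' R)))"
proof
  let ?S = "insert x (insert w (insert w' R))"
  assume "dependent ?S"
  then obtain \<mu> v where mu: "v \<in> ?S" "\<mu> v \<noteq> 0" "(\<Sum>t\<in>?S. \<mu> t *\<^sub>R t) = 0"
    using dependent_finite[of ?S] R(1) by auto
  have "(\<Sum>t\<in>?S. \<mu> t *\<^sub>R t) = \<mu> x *\<^sub>R x + \<mu> w *\<^sub>R w + \<mu> w' *\<^sub>R w' + (\<Sum>t\<in>R. \<mu> t *\<^sub>R t)"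
    using d R(1) by simp
  also have "\<dots> = ((\<mu> x * a) *\<^sub>R u + (\<Sum>t\<in>R. \<mu> t *\<^sub>R t)) + (\<mu> x * b + \<mu> w) *\<^sub>R w + \<mu> w' *\<^sub>R w'"
    using w(6) by (simp add: algebra_simps)
  finally have eq0: "((\<mu> x * a) *\<^sub>R u + (\<Sum>t\<in>R. \<mu> t *\<^sub>R t)) + (\<mu> x * b + \<mu> w) *\<^sub>R w + \<mu> w' *\<^sub>R w' = 0"
    using mu(3) by simp
  have s1: "(\<mu> x * a) *\<^sub>R u + (\<Sum>t\<in>R. \<mu> t *\<^sub>R t) \<in> span (Xs i)"
    using R by (intro span_add span_mul span_base span_sum) auto
  have s2: "(\<mu> x * b + \<mu> w) *\<^sub>R w \<in> span (Xs j)" using w by (intro span_mul span_base)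
  have s3: "\<mu> w' *\<^sub>R w' \<in> span (Xs m)" using w by (intro span_mul span_base)
  note z = ds3[OF sk idx s1 s2 s3 eq0]
  define f where "f t = (if t = u then \<mu> x * a else \<mu> t)" for t
  have "(\<Sum>t\<in>insert u R. f t *\<^sub>R t) = (\<mu> x * a) *\<^sub>R u + (\<Sum>t\<in>R. \<mu> t *\<^sub>R t)"
    using R(1,4) by (simp add: f_def) (rule sum.cong, auto)
  then have "(\<Sum>t\<in>insert u R. f t *\<^sub>R t) = 0" using z by simp
  then have fz: "\<forall>t\<in>insert u R. f t = 0" using R(5) dependent_finite[of "insert u R"] R(1) by auto
  then have mx: "\<mu> x = 0" using w(5) by (simp add: f_def)
  have mR: "\<forall>t\<in>R. \<mu> t = 0" using fz R(4) by (auto simp: f_def split: if_splits)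
  have mw: "\<mu> w = 0" using z mx w(3) by simp
  have mw': "\<mu> w' = 0" using z w(4) by simp
  show False using mu(1,2) mx mw mw' mR by auto
qed

lemma core:
  fixes X :: "'a::euclidean_space set" and Xs :: "nat \<Rightarrow> 'a set"
  assumes st: "standing_setting X" and sk: "skeleton X k Xs"
    and xy: "x \<in> X" "y \<in> X"
    and idx: "i < k" "j < k" "m < k" "i \<noteq> j" "i \<noteq> m" "j \<noteq> m"
    and xs: "x \<notin> span (Xs i)" "x \<notin> span (Xs j)" "x \<notin> span (Xs m)"
    and mem: "u \<in> Xs i" "u' \<in> Xs i" "w \<in> Xs j" "w' \<in> Xs m"
    and pos: "a > 0" "b > 0" "c > 0" "d > 0"
    and xe: "x = a *\<^sub>R u + b *\<^sub>R w" and ye: "y = c *\<^sub>R u' + d *\<^sub>R w'"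
  shows False
proof -
  have sub: "\<And>l. l < k \<Longrightarrow> Xs l \<subseteq> X" using sk unfolding skeleton_def by auto
  have disj: "\<And>l l'. l < k \<Longrightarrow> l' < k \<Longrightarrow> l \<noteq> l' \<Longrightarrow> Xs l \<inter> Xs l' = {}"
    using sk unfolding skeleton_def by auto
  have finX: "finite X" and X0: "0 \<notin> X" using st unfolding standing_setting_def by auto
  have spanX: "span X = UNIV"
  proof -
    { fix v :: 'a
      have ds: "direct_sum_UNIV k (\<lambda>l. span (Xs l))" using sk unfolding skeleton_def by simp
      obtain U where U: "\<forall>l<k. U l \<in> span (Xs l)" "v = (\<Sum>l<k. U l)"
        using ds unfolding direct_sum_UNIV_def by metis
      have "\<forall>l<k. U l \<in> span X" using U(1) sub by (meson span_mono subsetD)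
      then have "v \<in> span X" unfolding U(2) by (intro span_sum) auto }
    then show ?thesis by auto
  qed
  have finXs: "finite (Xs i)" using sub[OF idx(1)] finX finite_subset by blast
  have nz: "u \<noteq> 0" "w \<noteq> 0" "w' \<noteq> 0" "u' \<noteq> 0" using mem sub idx X0 by blast+
  have inX: "u \<in> X" "u' \<in> X" "w \<in> X" "w' \<in> X" using mem sub idx by blast+
  have d0: "x \<noteq> w" "x \<noteq> w'" using xs(2,3) mem span_base by blast+
  have d1: "w \<noteq> w'" using disj[OF idx(2,3,6)] mem by blast
  have wi: "w \<notin> Xs i" "w' \<notin> Xs i" using disj[OF idx(1,2,4)] disj[OF idx(1,3,5)] mem by blast+
  have xi: "x \<notin> Xs i" using xs(1) span_base by blast
  show False
  proof (cases "u = u'")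
    case True
    define S where "S = insert x (insert w (insert w' {}))"
    have indS: "independent S" unfolding S_def
      by (rule indepS[OF sk idx, of "{}" u w w' a x b]) (use mem nz pos xe d0 d1 in auto)
    define \<beta> where "\<beta> t = (if t = x then c / a else if t = w then - (c * b / a) else d)" for t
    have "(\<Sum>s\<in>S. \<beta> s *\<^sub>R s) = (c / a) *\<^sub>R x + (- (c * b / a)) *\<^sub>R w + d *\<^sub>R w'"
      unfolding S_def \<beta>_def using d0 d1 by simp
    also have "\<dots> = y" unfolding xe ye True using pos by (simp add: algebra_simps)
    finally have yrep: "y = (\<Sum>s\<in>S. \<beta> s *\<^sub>R s)" by simp
    show False
      by (rule conical_contra[OF st spanX _ _ indS xy(2) yrep, of x w' w])
        (use S_def inX xy d0 d1 pos in \<open>auto simp: \<beta>_def\<close>)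
  next
    case False
    have na: "\<not> affine_dependent (Xs i)" and ri: "0 \<in> rel_interior (convex hull (Xs i))"
      using sk idx unfolding skeleton_def by auto
    obtain lm where lm: "\<forall>t\<in>Xs i. 0 < lm t" "sum lm (Xs i) = 1" "(\<Sum>t\<in>Xs i. lm t *\<^sub>R t) = 0"
      using ri rel_interior_convex_hull_explicit[OF na] by auto
    define R where "R = Xs i - {u, u'}"
    have indu: "independent (insert u R)"
    proof -
      have "insert u R = Xs i - {u'}" using R_def mem False by auto
      then show ?thesis using indep_remove[OF finXs na lm mem(2)] by simp
    qed
    have finR: "finite R" using finXs R_def by auto
    define S where "S = insert x (insert w (insert w' R))"
    have indS: "independent S" unfolding S_def
      by (rule indepS[OF sk idx finR _ mem(1) _ indu mem(3,4) nz(2,3) _ xe])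
        (use R_def pos xi wi d0 d1 in auto)
    define L where "L = (\<Sum>t\<in>R. lm t *\<^sub>R t)"
    have Ti: "Xs i = insert u (insert u' R)" using R_def mem by auto
    have rel: "lm u *\<^sub>R u + lm u' *\<^sub>R u' + L = 0"
      using lm(3) False finR unfolding Ti L_def by (simp add: R_def add.assoc)
    have lu: "lm u > 0" "lm u' > 0" using lm(1) mem by auto
    define \<beta> where "\<beta> t = (if t = x then - (c * lm u / (a * lm u')) else if t = w then c * lm u * b / (a * lm u')
       else if t = w' then d else - (c * lm t / lm u'))" for t
    have xR: "x \<notin> R" "w \<notin> R" "w' \<notin> R" using R_def xi wi by auto
    have sR: "(\<Sum>t\<in>R. \<beta> t *\<^sub>R t) = (- (c / lm u')) *\<^sub>R L"
    proof -
      have "(\<Sum>t\<in>R. \<beta> t *\<^sub>R t) = (\<Sum>t\<in>R. (- (c / lm u')) *\<^sub>R (lm t *\<^sub>R t))"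
        by (rule sum.cong) (use xR in \<open>auto simp: \<beta>_def\<close>)
      then show ?thesis unfolding L_def by (simp add: scaleR_sum_right)
    qed
    have u'e: "u' = (- (1 / lm u')) *\<^sub>R (lm u *\<^sub>R u + L)"
    proof -
      have "lm u' *\<^sub>R u' = - (lm u *\<^sub>R u + L)" using rel by (simp add: algebra_simps eq_neg_iff_add_eq_0)
      then have "(1 / lm u') *\<^sub>R (lm u' *\<^sub>R u') = (1 / lm u') *\<^sub>R (- (lm u *\<^sub>R u + L))" by simp
      then show ?thesis using lu by (simp add: algebra_simps)
    qed
    have "(\<Sum>s\<in>S. \<beta> s *\<^sub>R s) = \<beta> x *\<^sub>R x + \<beta> w *\<^sub>R w + \<beta> w' *\<^sub>R w' + (\<Sum>t\<in>R. \<beta> t *\<^sub>R t)"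
      unfolding S_def using xR d0 d1 finR by (simp add: algebra_simps)
    also have "\<dots> = (- (c * lm u / lm u')) *\<^sub>R u + d *\<^sub>R w' + (- (c / lm u')) *\<^sub>R L"
    proof -
      have bx: "\<beta> x = - (c * lm u / (a * lm u'))" "\<beta> w = c * lm u * b / (a * lm u')" "\<beta> w' = d"
        using d0 d1 by (auto simp: \<beta>_def)
      have e: "\<beta> x *\<^sub>R x + \<beta> w *\<^sub>R w = (- (c * lm u / lm u')) *\<^sub>R u"
        unfolding bx(1,2) unfolding xe using pos lu by (simp add: algebra_simps)
      show ?thesis unfolding sR bx(3) using e by (simp add: algebra_simps)
    qed
    also have "\<dots> = y"
    proof -
      have "c *\<^sub>R u' = c *\<^sub>R ((- (1 / lm u')) *\<^sub>R (lm u *\<^sub>R u + L))" using u'e by (rule arg_cong)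
      then have "c *\<^sub>R u' = (- (c * lm u / lm u')) *\<^sub>R u + (- (c / lm u')) *\<^sub>R L"
        by (simp add: algebra_simps)
      then show ?thesis unfolding ye by simp
    qed
    finally have yrep: "y = (\<Sum>s\<in>S. \<beta> s *\<^sub>R s)" by simp
    have RX: "R \<subseteq> X" using R_def sub idx by auto
    show False
      by (rule conical_contra[OF st spanX _ _ indS xy(2) yrep, of w w' x])
        (use S_def inX xy d0 d1 pos lu RX finR in \<open>auto simp: \<beta>_def\<close>)
  qed
qed

lemma getcoef:
  fixes x p q :: "'a::real_vector"
  assumes "x \<in> pos {p, q}" "p \<in> P" "q \<in> Q" "x \<notin> span P" "x \<notin> span Q"
  shows "\<exists>a b. a > 0 \<and> b > 0 \<and> x = a *\<^sub>R p + b *\<^sub>R q"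
proof (cases "p = q")
  case True
  then obtain c where "x = c p *\<^sub>R p" using assms(1) unfolding pos_def by auto
  then have "x \<in> span P" using assms(2) by (simp add: span_base span_mul)
  then show ?thesis using assms(4) by simp
next
  case False
  then obtain c where c: "c p \<ge> 0" "c q \<ge> 0" "x = c p *\<^sub>R p + c q *\<^sub>R q"
    using assms(1) unfolding pos_def by auto
  have "c p \<noteq> 0"
  proof
    assume "c p = 0"
    then have "x \<in> span Q" using c(3) assms(3) by (simp add: span_base span_mul)
    then show False using assms(5) by simp
  qed
  moreover have "c q \<noteq> 0"
  proof
    assume "c q = 0"
    then have "x \<in> span P" using c(3) assms(2) by (simp add: span_base span_mul)
    then show False using assms(4) by simp
  qed
  ultimately show ?thesis using c by (intro exI[of _ "c p"] exI[of _ "c q"]) auto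
qed

theorem proposition5p2:
  fixes X :: "'a::euclidean_space set" and Xs :: "nat \<Rightarrow> 'a set" and k :: nat
    and x y xi xj yi yj :: 'a and i j i' j' :: nat
  assumes "standing_setting X"
    and "skeleton X k Xs"
    and "x \<in> X" and "y \<in> X"
    and "\<forall>l<k. x \<notin> span (Xs l)" and "\<forall>l<k. y \<notin> span (Xs l)"
    and "i < k" "j < k" "i' < k" "j' < k" "i \<noteq> j" "i' \<noteq> j'"
    and "xi \<in> Xs i" "xj \<in> Xs j" "yi \<in> Xs i'" "yj \<in> Xs j'"
    and "x \<in> pos {xi, xj}" and "y \<in> pos {yi, yj}"
  shows "{i, j} = {i', j'} \<or> {i, j} \<inter> {i', j'} = {}"
proof (rule ccontr)
  assume H: "\<not> ?thesis"
  obtain a b where ab: "a > 0" "b > 0" "x = a *\<^sub>R xi + b *\<^sub>R xj"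
    using getcoef[OF assms(17,13,14)] assms(5,7,8) by blast
  obtain c d where cd: "c > 0" "d > 0" "y = c *\<^sub>R yi + d *\<^sub>R yj"
    using getcoef[OF assms(18,15,16)] assms(6,9,10) by blast
  have xe2: "x = b *\<^sub>R xj + a *\<^sub>R xi" using ab by (simp add: add.commute)
  have ye2: "y = d *\<^sub>R yj + c *\<^sub>R yi" using cd by (simp add: add.commute)
  have "(i = i' \<and> j \<noteq> j') \<or> (i = j' \<and> j \<noteq> i') \<or> (j = i' \<and> i \<noteq> j') \<or> (j = j' \<and> i \<noteq> i')"
    using H assms(11,12) by blast
  then show False
  proof (elim disjE conjE)
    assume e: "i = i'" "j \<noteq> j'"
    show False
      by (rule core[OF assms(1,2,3,4), of i j j' xi yi xj yj a b c d])
        (use assms e ab cd in auto)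
  next
    assume e: "i = j'" "j \<noteq> i'"
    show False
      by (rule core[OF assms(1,2,3,4), of i j i' xi yj xj yi a b d c])
        (use assms e ab(1,2) ab(3) ye2 cd(1,2) in auto)
  next
    assume e: "j = i'" "i \<noteq> j'"
    show False
      by (rule core[OF assms(1,2,3,4), of j i j' xj yi xi yj b a c d])
        (use assms e xe2 ab(1,2) cd in auto)
  next
    assume e: "j = j'" "i \<noteq> i'"
    show False
      by (rule core[OF assms(1,2,3,4), of j i i' xj yj xi yi b a d c])
        (use assms e xe2 ab(1,2) ye2 cd(1,2) in auto)
  qed
qed

end
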